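(* Let $n\ge2$ and let $P_i$ ($1\le i\le n$) be an indecomposable projective $\Lambda_n^2$-module. Then the $\tau$-perpendicular category $J(P_i)$ of $P_i$ in $\mathrm{mod}\,\Lambda_n^2$ is equivalent to $\mathrm{mod}\,\Gamma_{n-1}^2$.
   Context: $\mathbb{F}$ is an algebraically closed field, $\mathrm{mod}\,A$ the category of finitely generated left modules over a finite dimensional algebra $A$, $\tau$ the Auslander–Reiten translation. For $\tau$-rigid $M$ (i.e. $\mathrm{Hom}(M,\tau M)=0$), $J(M)=\{X:\mathrm{Hom}(M,X)=0,\ \mathrm{Hom}(X,\tau M)=0\}$. $A_m$ is the quiver $1\to2\to\cdots\to m$, $C_n$ the cyclic quiver $1\to2\to\cdots\to n\to1$; with $R$ the arrow ideal, $\Gamma_m^2=\mathbb{F}A_m/R^2$ (so $\Gamma_1^2=\mathbb{F}$) and $\Lambda_n^2=\mathbb{F}C_n/R^2$. *)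

theory Defs
  imports "Jordan_Normal_Form.Matrix" "HOL-Computational_Algebra.Polynomial"
begin

text \<open>
  For a quiver Q with arrow ideal R, finitely generated left modules over the
  radical-square-zero algebra FQ/R^2 are identified (as usual) with finite dimensional
  representations of Q in which every composite of two consecutive arrows is zero.
  A representation is stored with F^(d v) at vertex v and a (d w x d u) matrix for an
  arrow (u,w); data outside the quiver is normalised to zero so that equality is canonical.
\<close>

type_synonym quiver = "nat set \<times> (nat \<times> nat) set"

text \<open>The cyclic quiver C_n on vertices 0..n-1 (paper's vertex k is k-1 here) and the
  linearly oriented A_m on vertices 0..m-1.\<close>
definition Lambda2 :: "nat \<Rightarrow> quiver" where
  "Lambda2 n = ({0..<n}, {(k, Suc k mod n) | k. k < n})"

definition Gamma2 :: "nat \<Rightarrow> quiver" where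
  "Gamma2 m = ({0..<m}, {(k, Suc k) | k. Suc k < m})"

record 'a rep =
  rdim :: "nat \<Rightarrow> nat"
  rmap :: "nat \<times> nat \<Rightarrow> 'a mat"

definition is_rep :: "quiver \<Rightarrow> 'a::field rep \<Rightarrow> bool" where
  "is_rep Q M \<longleftrightarrow>
     (\<forall>v. v \<notin> fst Q \<longrightarrow> rdim M v = 0) \<and>
     (\<forall>e \<in> snd Q. rmap M e \<in> carrier_mat (rdim M (snd e)) (rdim M (fst e))) \<and>
     (\<forall>e. e \<notin> snd Q \<longrightarrow> rmap M e = zero_mat (rdim M (snd e)) (rdim M (fst e))) \<and>
     (\<forall>u w x. (u, w) \<in> snd Q \<longrightarrow> (w, x) \<in> snd Q \<longrightarrow>
        rmap M (w, x) * rmap M (u, w) = zero_mat (rdim M x) (rdim M u))"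

definition is_hom :: "quiver \<Rightarrow> 'a::field rep \<Rightarrow> 'a rep \<Rightarrow> (nat \<Rightarrow> 'a mat) \<Rightarrow> bool" where
  "is_hom Q M N h \<longleftrightarrow>
     (\<forall>v \<in> fst Q. h v \<in> carrier_mat (rdim N v) (rdim M v)) \<and>
     (\<forall>v. v \<notin> fst Q \<longrightarrow> h v = zero_mat (rdim N v) (rdim M v)) \<and>
     (\<forall>(u, w) \<in> snd Q. h w * rmap M (u, w) = rmap N (u, w) * h u)"

definition Hom :: "quiver \<Rightarrow> 'a::field rep \<Rightarrow> 'a rep \<Rightarrow> (nat \<Rightarrow> 'a mat) set" where
  "Hom Q M N = {h. is_hom Q M N h}"

definition comp_hom :: "(nat \<Rightarrow> 'a::field mat) \<Rightarrow> (nat \<Rightarrow> 'a mat) \<Rightarrow> (nat \<Rightarrow> 'a mat)" where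
  "comp_hom g h = (\<lambda>v. g v * h v)"

definition id_hom :: "quiver \<Rightarrow> 'a::field rep \<Rightarrow> (nat \<Rightarrow> 'a mat)" where
  "id_hom Q M = (\<lambda>v. if v \<in> fst Q then one_mat (rdim M v) else zero_mat (rdim M v) (rdim M v))"

definition hom_zero :: "quiver \<Rightarrow> 'a::field rep \<Rightarrow> 'a rep \<Rightarrow> bool" where
  "hom_zero Q M N \<longleftrightarrow> (\<forall>h \<in> Hom Q M N. \<forall>v \<in> fst Q. h v = zero_mat (rdim N v) (rdim M v))"

definition img :: "'a::field mat \<Rightarrow> 'a vec set" where
  "img A = {mult_mat_vec A x | x. x \<in> carrier_vec (dim_col A)}"

definition surj_hom :: "quiver \<Rightarrow> 'a::field rep \<Rightarrow> 'a rep \<Rightarrow> (nat \<Rightarrow> 'a mat) \<Rightarrow> bool" where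
  "surj_hom Q M N h \<longleftrightarrow> (\<forall>v \<in> fst Q. img (h v) = carrier_vec (rdim N v))"

definition isomorphic :: "quiver \<Rightarrow> 'a::field rep \<Rightarrow> 'a rep \<Rightarrow> bool" where
  "isomorphic Q M N \<longleftrightarrow> (\<exists>h g. is_hom Q M N h \<and> is_hom Q N M g \<and>
      comp_hom g h = id_hom Q M \<and> comp_hom h g = id_hom Q N)"

definition projective :: "quiver \<Rightarrow> 'a::field rep \<Rightarrow> bool" where
  "projective Q P \<longleftrightarrow> is_rep Q P \<and>
     (\<forall>X Y g h. is_rep Q X \<longrightarrow> is_rep Q Y \<longrightarrow> is_hom Q X Y g \<longrightarrow> surj_hom Q X Y g \<longrightarrow>
        is_hom Q P Y h \<longrightarrow> (\<exists>l. is_hom Q P X l \<and> comp_hom g l = h))"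

definition essential_epi :: "quiver \<Rightarrow> 'a::field rep \<Rightarrow> 'a rep \<Rightarrow> (nat \<Rightarrow> 'a mat) \<Rightarrow> bool" where
  "essential_epi Q P M p \<longleftrightarrow> is_hom Q P M p \<and> surj_hom Q P M p \<and>
     (\<forall>(Z::'a rep) h. is_rep Q Z \<longrightarrow> is_hom Q Z P h \<longrightarrow> surj_hom Q Z M (comp_hom p h) \<longrightarrow>
        surj_hom Q Z P h)"

text \<open>Minimal projective presentation P1 --f--> P0 --p--> M --> 0: p is a projective cover
  of M and f corestricts to a projective cover of ker p.\<close>
definition min_proj_pres ::
  "quiver \<Rightarrow> 'a::field rep \<Rightarrow> 'a rep \<Rightarrow> 'a rep \<Rightarrow> (nat \<Rightarrow> 'a mat) \<Rightarrow> (nat \<Rightarrow> 'a mat) \<Rightarrow> bool" where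
  "min_proj_pres Q M P0 P1 p f \<longleftrightarrow>
     projective Q P0 \<and> projective Q P1 \<and> essential_epi Q P0 M p \<and> is_hom Q P1 P0 f \<and>
     (\<forall>v \<in> fst Q. p v * f v = zero_mat (rdim M v) (rdim P1 v)) \<and>
     (\<forall>v \<in> fst Q. {x \<in> carrier_vec (rdim P0 v). mult_mat_vec (p v) x = zero_vec (rdim M v)}
                    \<subseteq> img (f v)) \<and>
     (\<forall>(Z::'a rep) h. is_rep Q Z \<longrightarrow> is_hom Q Z P1 h \<longrightarrow>
        (\<forall>v \<in> fst Q. img (f v * h v) = img (f v)) \<longrightarrow> surj_hom Q Z P1 h)"

text \<open>The indecomposable projective P_v = A e_v of FQ/R^2 (Q loopless): F at v, and F at the
  target of each arrow starting at v.\<close>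
definition proj_dim :: "quiver \<Rightarrow> nat \<Rightarrow> nat \<Rightarrow> nat" where
  "proj_dim Q v w = (if w \<in> fst Q then (if w = v then 1 else 0) + (if (v, w) \<in> snd Q then 1 else 0) else 0)"

definition proj_rep :: "quiver \<Rightarrow> nat \<Rightarrow> 'a::field rep" where
  "proj_rep Q v = \<lparr> rdim = proj_dim Q v,
     rmap = (\<lambda>e. if e \<in> snd Q \<and> fst e = v then one_mat 1
                 else zero_mat (proj_dim Q v (snd e)) (proj_dim Q v (fst e))) \<rparr>"

text \<open>For an arrow a : u \<rightarrow> w, right multiplication by a gives A e_w \<rightarrow> A e_u.\<close>
definition arrow_hom :: "quiver \<Rightarrow> nat \<Rightarrow> nat \<Rightarrow> (nat \<Rightarrow> 'a::field mat)" where
  "arrow_hom Q u w = (\<lambda>x. if x = w then one_mat 1 else zero_mat (proj_dim Q u x) (proj_dim Q w x))"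

text \<open>Auslander--Reiten translate: N \<cong> D Tr M, where Tr M = coker Hom_A(f, A) for a minimal
  projective presentation, the right module Hom_A(P1, A) having vertex-w part
  Hom_A(P1, A e_w).  The map g w identifies (Tr M) e_w with the dual of N_w (row vectors),
  compatibly with the arrows.\<close>
definition is_tau :: "quiver \<Rightarrow> 'a::field rep \<Rightarrow> 'a rep \<Rightarrow> bool" where
  "is_tau Q M N \<longleftrightarrow> is_rep Q N \<and>
     (\<exists>P0 P1 p f (g :: nat \<Rightarrow> (nat \<Rightarrow> 'a mat) \<Rightarrow> 'a vec).
        min_proj_pres Q M P0 P1 p f \<and>
        (\<forall>w \<in> fst Q.
           (\<forall>y \<in> Hom Q P1 (proj_rep Q w). g w y \<in> carrier_vec (rdim N w)) \<and>
           (\<forall>a b y y'. y \<in> Hom Q P1 (proj_rep Q w) \<longrightarrow> y' \<in> Hom Q P1 (proj_rep Q w) \<longrightarrow>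
               g w (\<lambda>v. smult_mat a (y v) + smult_mat b (y' v)) =
               smult_vec a (g w y) + smult_vec b (g w y')) \<and>
           (\<forall>\<xi> \<in> carrier_vec (rdim N w). \<exists>y \<in> Hom Q P1 (proj_rep Q w). g w y = \<xi>) \<and>
           (\<forall>y \<in> Hom Q P1 (proj_rep Q w).
               g w y = zero_vec (rdim N w) \<longleftrightarrow>
               (\<exists>h \<in> Hom Q P0 (proj_rep Q w). y = comp_hom h f))) \<and>
        (\<forall>(u, w) \<in> snd Q. \<forall>y \<in> Hom Q P1 (proj_rep Q w).
           g u (comp_hom (arrow_hom Q u w) y) = mult_mat_vec (transpose_mat (rmap N (u, w))) (g w y)))"

definition tau_perp :: "quiver \<Rightarrow> 'a::field rep \<Rightarrow> 'a rep set" where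
  "tau_perp Q M = {X. is_rep Q X \<and> hom_zero Q M X \<and> (\<forall>N. is_tau Q M N \<longrightarrow> hom_zero Q X N)}"

definition cat_equivalent :: "quiver \<Rightarrow> 'a::field rep set \<Rightarrow> quiver \<Rightarrow> bool" where
  "cat_equivalent Q C Q' \<longleftrightarrow>
     (\<exists>(F :: 'a rep \<Rightarrow> 'a rep) (G :: 'a rep \<Rightarrow> 'a rep \<Rightarrow> (nat \<Rightarrow> 'a mat) \<Rightarrow> (nat \<Rightarrow> 'a mat)).
        (\<forall>X \<in> C. is_rep Q' (F X)) \<and>
        (\<forall>X \<in> C. \<forall>Y \<in> C. \<forall>h \<in> Hom Q X Y. G X Y h \<in> Hom Q' (F X) (F Y)) \<and>
        (\<forall>X \<in> C. G X X (id_hom Q X) = id_hom Q' (F X)) \<and>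
        (\<forall>X \<in> C. \<forall>Y \<in> C. \<forall>Z \<in> C. \<forall>h \<in> Hom Q X Y. \<forall>g \<in> Hom Q Y Z.
            G X Z (comp_hom g h) = comp_hom (G Y Z g) (G X Y h)) \<and>
        (\<forall>X \<in> C. \<forall>Y \<in> C. inj_on (G X Y) (Hom Q X Y)) \<and>
        (\<forall>X \<in> C. \<forall>Y \<in> C. G X Y ` Hom Q X Y = Hom Q' (F X) (F Y)) \<and>
        (\<forall>Y. is_rep Q' Y \<longrightarrow> (\<exists>X \<in> C. isomorphic Q' (F X) Y)))"

end

theory Submission
  imports Defs
begin

context fixes n i :: nat assumes n2: "n \<ge> 2" and i: "i < n" begin
definition "sig k = (if Suc i + k < n then Suc i + k else Suc i + k - n)"
definition "rho v = (if i < v then v - Suc i else v + n - Suc i)"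
lemma modlt2: "(a::nat) < 2 * n \<Longrightarrow> a mod n = (if a < n then a else a - n)"
  by (metis le_mod_geq less_diff_conv2 linorder_not_le mod_less mult_2 verit_comp_simplify1(3))
lemma sucmod: "v < n \<Longrightarrow> Suc v mod n = (if Suc v < n then Suc v else 0)"
  by (simp add: modlt2)
lemma sig1: "k < n - 1 \<Longrightarrow> sig k < n \<and> sig k \<noteq> i \<and> rho (sig k) = k"
  using n2 i unfolding sig_def rho_def by (simp split: if_splits; linarith)
lemma rho1: "v < n \<Longrightarrow> v \<noteq> i \<Longrightarrow> rho v < n - 1 \<and> sig (rho v) = v"
  using n2 i unfolding sig_def rho_def by (simp split: if_splits; linarith)
lemma sig_suc: "Suc k < n - 1 \<Longrightarrow> sig (Suc k) = Suc (sig k) mod n"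
  using n2 i unfolding sig_def by (simp add: sucmod split: if_splits; linarith)
lemma rho_suc: "v < n \<Longrightarrow> v \<noteq> i \<Longrightarrow> Suc v mod n \<noteq> i \<Longrightarrow> Suc (rho v) < n - 1 \<and> rho (Suc v mod n) = Suc (rho v)"
  using n2 i unfolding rho_def by (simp add: sucmod split: if_splits; linarith)
end


lemma mat0_eq: "A \<in> carrier_mat r c \<Longrightarrow> B \<in> carrier_mat r c \<Longrightarrow> r = 0 \<or> c = 0 \<Longrightarrow> A = B"
  by (rule eq_matI) auto

lemma mult_inner0: "A \<in> carrier_mat m 0 \<Longrightarrow> B \<in> carrier_mat 0 k \<Longrightarrow> A * B = zero_mat m k"
  by (rule eq_matI) (auto simp: scalar_prod_def)

lemma zero_mult_vec: "v \<in> carrier_vec nc \<Longrightarrow> zero_mat nr nc *\<^sub>v v = (0\<^sub>v nr :: 'a::semiring_0 vec)"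
  by (rule eq_vecI) (auto simp: scalar_prod_def)

definition colm :: "'a vec \<Rightarrow> 'a mat" where
  "colm x = mat (dim_vec x) 1 (\<lambda>(r,c). x $ r)"

lemma colm_carrier: "x \<in> carrier_vec k \<Longrightarrow> colm x \<in> carrier_mat k 1"
  by (simp add: colm_def)

lemma col_colm: "col (colm x) 0 = x"
  by (rule eq_vecI) (auto simp: colm_def)

lemma colm_mult: "A \<in> carrier_mat m k \<Longrightarrow> (x::'a::semiring_0 vec) \<in> carrier_vec k \<Longrightarrow> A * colm x = colm (A *\<^sub>v x)"
proof -
  assume A: "A \<in> carrier_mat m k" and x: "x \<in> carrier_vec k"
  have v: "vec k (($) x) = x" using x by (intro eq_vecI) auto
  show ?thesis using A x by (intro eq_matI) (auto simp: colm_def v)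
qed

lemma colm_zero: "colm (0\<^sub>v m) = zero_mat m 1"
  by (rule eq_matI) (auto simp: colm_def)

lemma colm_one: "x \<in> carrier_vec 1 \<Longrightarrow> x $ 0 = 1 \<Longrightarrow> colm x = one_mat 1"
  by (rule eq_matI) (auto simp: colm_def)


lemma img_one: "img (one_mat k :: 'a::field mat) = carrier_vec k"
proof
  show "img (one_mat k :: 'a mat) \<subseteq> carrier_vec k" unfolding img_def by auto
  show "carrier_vec k \<subseteq> img (one_mat k :: 'a mat)"
  proof
    fix x :: "'a vec" assume "x \<in> carrier_vec k"
    then show "x \<in> img (one_mat k)" unfolding img_def
      by (intro CollectI exI[of _ x]) simp
  qed
qed

lemma img_col0: "A \<in> carrier_mat r 0 \<Longrightarrow> img (A :: 'a::field mat) = {0\<^sub>v r}"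
proof -
  assume A: "A \<in> carrier_mat r 0"
  have z: "\<And>x. x \<in> carrier_vec 0 \<Longrightarrow> A *\<^sub>v x = 0\<^sub>v r"
    using A by (intro eq_vecI) (auto simp: scalar_prod_def)
  have d: "dim_col A = 0" using A by simp
  show ?thesis
  proof
    show "img A \<subseteq> {0\<^sub>v r}" unfolding img_def d using z by auto
    show "{0\<^sub>v r} \<subseteq> img A" 
    proof
      fix y :: "'a vec" assume "y \<in> {0\<^sub>v r}"
      hence "y = A *\<^sub>v 0\<^sub>v 0" using z[of "0\<^sub>v 0"] by simp
      thus "y \<in> img A" unfolding img_def d by (intro CollectI exI[of _ "0\<^sub>v 0"]) simp
    qed
  qed
qed

lemma carrier_vec_single: "carrier_vec r = {0\<^sub>v r :: 'a::zero_neq_one vec} \<Longrightarrow> r = 0"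
proof (rule ccontr)
  assume a: "carrier_vec r = {0\<^sub>v r :: 'a vec}" "r \<noteq> 0"
  have "vec r (\<lambda>_. 1::'a) \<in> carrier_vec r" by simp
  hence "vec r (\<lambda>_. 1::'a) \<in> {0\<^sub>v r}" by (subst a(1)[symmetric])
  hence "vec r (\<lambda>_. 1::'a) = 0\<^sub>v r" by simp
  hence "vec r (\<lambda>_. 1::'a) $ 0 = 0\<^sub>v r $ 0" by simp
  thus False using a by simp
qed

lemma hom_carrier: "is_hom Q M N h \<Longrightarrow> h v \<in> carrier_mat (rdim N v) (rdim M v)"
  unfolding is_hom_def by (cases "v \<in> fst Q") auto

lemma rep_carrier: "is_rep Q M \<Longrightarrow> rmap M e \<in> carrier_mat (rdim M (snd e)) (rdim M (fst e))"
  unfolding is_rep_def by (cases "e \<in> snd Q"; cases e) auto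

lemma mult_vec_zero: "A \<in> carrier_mat r c \<Longrightarrow> A *\<^sub>v 0\<^sub>v c = (0\<^sub>v r :: 'a::semiring_0 vec)"
  by (intro eq_vecI) auto


context fixes n i :: nat assumes n2: "n \<ge> 2" and i: "i < n" begin

lemma lam_fst: "fst (Lambda2 n) = {0..<n}" by (simp add: Lambda2_def)
lemma lam_snd: "(u, w) \<in> snd (Lambda2 n) \<longleftrightarrow> u < n \<and> w = Suc u mod n"
  by (auto simp: Lambda2_def)
lemma sucn_ne: "w < n \<Longrightarrow> Suc w mod n \<noteq> w \<and> Suc w mod n < n"
  using n2 by (auto simp: sucmod[OF n2 i])

lemma pd_eq: "w < n \<Longrightarrow> proj_dim (Lambda2 n) w v = (if v = w \<or> v = Suc w mod n then 1 else 0)"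
  using sucn_ne[of w] unfolding proj_dim_def lam_fst lam_snd by auto

lemma pd_carrier: "w < n \<Longrightarrow> rmap (proj_rep (Lambda2 n) w :: 'a::field rep) e \<in> carrier_mat (proj_dim (Lambda2 n) w (snd e)) (proj_dim (Lambda2 n) w (fst e))"
  using sucn_ne[of w] by (cases e) (auto simp: proj_rep_def lam_snd pd_eq)

lemma proj_is_rep: "w < n \<Longrightarrow> is_rep (Lambda2 n) (proj_rep (Lambda2 n) w :: 'a::field rep)"
proof -
  assume w: "w < n"
  let ?P = "proj_rep (Lambda2 n) w :: 'a rep"
  let ?d = "proj_dim (Lambda2 n) w"
  have d: "rdim ?P = ?d" by (simp add: proj_rep_def)
  have rad: "rmap ?P (v, x) * rmap ?P (u, v) = zero_mat (?d x) (?d u)"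
    if "(u, v) \<in> snd (Lambda2 n)" "(v, x) \<in> snd (Lambda2 n)" for u v x
  proof (cases "u = w")
    case True
    then have v: "v = Suc w mod n" "v \<noteq> w" using that sucn_ne[OF w] by (auto simp: lam_snd)
    then have "rmap ?P (v, x) = zero_mat (?d x) 1" "rmap ?P (u, v) = one_mat 1" "?d u = 1"
      using that True w by (auto simp: proj_rep_def pd_eq)
    then show ?thesis by simp
  next
    case False
    then have "rmap ?P (u, v) = zero_mat (?d v) (?d u)" by (simp add: proj_rep_def)
    moreover have "rmap ?P (v, x) \<in> carrier_mat (?d x) (?d v)" using pd_carrier[OF w, of "(v,x)"] by simp
    ultimately show ?thesis by (simp add: right_mult_zero_mat)
  qed
  show ?thesis unfolding is_rep_def
  proof (intro conjI allI ballI impI)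
    fix v assume "v \<notin> fst (Lambda2 n)" then show "rdim ?P v = 0" by (simp add: d proj_dim_def)
  next
    fix e show "rmap ?P e \<in> carrier_mat (rdim ?P (snd e)) (rdim ?P (fst e))" using pd_carrier[OF w, of e] d by simp
  next
    fix e assume "e \<notin> snd (Lambda2 n)" then show "rmap ?P e = zero_mat (rdim ?P (snd e)) (rdim ?P (fst e))"
      by (simp add: proj_rep_def)
  next
    fix u v x assume "(u, v) \<in> snd (Lambda2 n)" "(v, x) \<in> snd (Lambda2 n)"
    then show "rmap ?P (v, x) * rmap ?P (u, v) = zero_mat (rdim ?P x) (rdim ?P u)" using rad d by simp
  qed
qed

definition liftP :: "'a::field rep \<Rightarrow> 'a vec \<Rightarrow> nat \<Rightarrow> 'a mat" where
  "liftP X x v = (if v = i then colm x else if v = Suc i mod n then colm (rmap X (i, Suc i mod n) *\<^sub>v x)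
     else zero_mat (rdim X v) (proj_dim (Lambda2 n) i v))"

lemma liftP_carrier: "is_rep (Lambda2 n) X \<Longrightarrow> x \<in> carrier_vec (rdim X i) \<Longrightarrow>
   liftP X x v \<in> carrier_mat (rdim X v) (proj_dim (Lambda2 n) i v)"
  using sucn_ne[OF i] rep_carrier[of "Lambda2 n" X "(i, Suc i mod n)"] i
  using colm_carrier[of x "rdim X i"] colm_carrier[of "rmap X (i, Suc i mod n) *\<^sub>v x" "rdim X (Suc i mod n)"]
  by (auto simp: liftP_def pd_eq[OF i])

lemma liftP_hom: assumes X: "is_rep (Lambda2 n) X" and x: "x \<in> carrier_vec (rdim X i)"
  shows "is_hom (Lambda2 n) (proj_rep (Lambda2 n) i) X (liftP X x)"
proof -
  let ?P = "proj_rep (Lambda2 n) i :: 'a rep"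
  let ?d = "proj_dim (Lambda2 n) i"
  let ?j = "Suc i mod n"
  have d: "rdim ?P = ?d" by (simp add: proj_rep_def)
  have j: "?j \<noteq> i" "?j < n" using sucn_ne[OF i] by auto
  have Xij: "rmap X (i, ?j) \<in> carrier_mat (rdim X ?j) (rdim X i)" using rep_carrier[OF X, of "(i, ?j)"] by simp
  have comm: "liftP X x w * rmap ?P (u, w) = rmap X (u, w) * liftP X x u"
    if uw: "(u, w) \<in> snd (Lambda2 n)" for u w
  proof -
    have wn: "w < n" using uw by (auto simp: lam_snd)
    have Xuw: "rmap X (u, w) \<in> carrier_mat (rdim X w) (rdim X u)" using rep_carrier[OF X, of "(u, w)"] by simp
    have Puw: "rmap ?P (u, w) \<in> carrier_mat (?d w) (?d u)" using pd_carrier[OF i, of "(u,w)"] by simp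
    have lw: "liftP X x w \<in> carrier_mat (rdim X w) (?d w)" using liftP_carrier[OF X x] .
    have lu: "liftP X x u \<in> carrier_mat (rdim X u) (?d u)" using liftP_carrier[OF X x] .
    show ?thesis
    proof (cases "u = i")
      case True
      then have w: "w = ?j" using uw by (simp add: lam_snd)
      have "rmap ?P (u, w) = one_mat 1" using True w uw by (simp add: proj_rep_def)
      moreover have "liftP X x w = colm (rmap X (i, ?j) *\<^sub>v x)" using w j by (simp add: liftP_def)
      moreover have "liftP X x u = colm x" using True by (simp add: liftP_def)
      moreover have "colm (rmap X (i, ?j) *\<^sub>v x) \<in> carrier_mat (rdim X ?j) 1"
        using Xij x by (intro colm_carrier) simp
      ultimately show ?thesis using True w colm_mult[OF Xij x] by simp
    next
      case False
      note ui = False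
      show ?thesis
      proof (cases "u = ?j")
        case True
        have P0: "rmap ?P (u, w) = zero_mat (?d w) (?d u)" using ui by (simp add: proj_rep_def)
        have du: "?d u = 1" using True i j by (simp add: pd_eq)
        have "(i, ?j) \<in> snd (Lambda2 n)" using i by (simp add: lam_snd)
        then have rad: "rmap X (u, w) * rmap X (i, ?j) = zero_mat (rdim X w) (rdim X i)"
          using X uw True unfolding is_rep_def by blast
        have "rmap X (u, w) * liftP X x u = rmap X (u, w) * colm (rmap X (i, ?j) *\<^sub>v x)"
          using True j by (simp add: liftP_def)
        also have "\<dots> = colm (rmap X (u, w) *\<^sub>v (rmap X (i, ?j) *\<^sub>v x))"
          using Xuw Xij x True by (intro colm_mult) auto
        also have "rmap X (u, w) *\<^sub>v (rmap X (i, ?j) *\<^sub>v x) = (rmap X (u, w) * rmap X (i, ?j)) *\<^sub>v x"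
          using Xuw Xij x True by (subst assoc_mult_mat_vec) auto
        also have "\<dots> = 0\<^sub>v (rdim X w)" using rad x by (simp add: zero_mult_vec)
        finally have R: "rmap X (u, w) * liftP X x u = zero_mat (rdim X w) 1" by (simp add: colm_zero)
        have "liftP X x w * rmap ?P (u, w) = zero_mat (rdim X w) 1"
          using lw P0 du by (simp add: right_mult_zero_mat)
        then show ?thesis using R by simp
      next
        case False
        have du: "?d u = 0" using False ui i by (simp add: pd_eq)
        show ?thesis
          by (rule mat0_eq[of _ "rdim X w" "?d u"]) (use lw Puw Xuw lu du in auto)
      qed
    qed
  qed
  show ?thesis unfolding is_hom_def
  proof (intro conjI ballI allI impI)
    fix v show "liftP X x v \<in> carrier_mat (rdim X v) (rdim ?P v)" using liftP_carrier[OF X x] d by simp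
  next
    fix v assume "v \<notin> fst (Lambda2 n)"
    then have "v \<noteq> i" "v \<noteq> ?j" using i j by (auto simp: lam_fst)
    then show "liftP X x v = zero_mat (rdim X v) (rdim ?P v)" by (simp add: liftP_def d)
  next
    fix e assume "e \<in> snd (Lambda2 n)"
    then show "case e of (u, w) \<Rightarrow> liftP X x w * rmap ?P (u, w) = rmap X (u, w) * liftP X x u"
      using comm by (cases e) simp
  qed
qed

end


context fixes n i :: nat assumes n2: "n \<ge> 2" and i: "i < n" begin

lemma P1_zero:
  assumes mpp: "min_proj_pres (Lambda2 n) (proj_rep (Lambda2 n) i :: 'a::field rep) P0 P1 p f"
  shows "rdim P1 v = 0"
proof -
  let ?Q = "Lambda2 n"
  let ?M = "proj_rep (Lambda2 n) i :: 'a rep"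
  let ?d = "proj_dim (Lambda2 n) i"
  let ?j = "Suc i mod n"
  have j: "?j \<noteq> i" "?j < n" using sucn_ne[OF n2 i i] by auto
  have dM: "rdim ?M = ?d" by (simp add: proj_rep_def)
  have P0: "is_rep ?Q P0" and P1: "is_rep ?Q P1" using mpp unfolding min_proj_pres_def projective_def by auto
  have ess: "essential_epi ?Q P0 ?M p" using mpp unfolding min_proj_pres_def by auto
  have ph: "is_hom ?Q P0 ?M p" and ps: "surj_hom ?Q P0 ?M p" using ess unfolding essential_epi_def by auto
  have fh: "is_hom ?Q P1 P0 f" using mpp unfolding min_proj_pres_def by auto
  have pf: "\<And>v. v < n \<Longrightarrow> p v * f v = zero_mat (rdim ?M v) (rdim P1 v)"
    using mpp unfolding min_proj_pres_def lam_fst[OF n2 i] by auto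
  have minim: "\<And>(Z::'a rep) h. is_rep ?Q Z \<Longrightarrow> is_hom ?Q Z P1 h \<Longrightarrow>
        (\<forall>v \<in> fst ?Q. img (f v * h v) = img (f v)) \<Longrightarrow> surj_hom ?Q Z P1 h"
    using mpp unfolding min_proj_pres_def by auto
  have pc: "\<And>v. p v \<in> carrier_mat (?d v) (rdim P0 v)" using hom_carrier[OF ph] dM by simp
  have fc: "\<And>v. f v \<in> carrier_mat (rdim P0 v) (rdim P1 v)" using hom_carrier[OF fh] by simp
  define e :: "'a vec" where "e = vec 1 (\<lambda>_. 1)"
  have ec: "e \<in> carrier_vec 1" by (simp add: e_def)
  have "img (p i) = carrier_vec 1" using ps i j unfolding surj_hom_def lam_fst[OF n2 i] by (simp add: dM pd_eq[OF n2 i i])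
  then have "e \<in> img (p i)" using ec by simp
  then obtain x where x: "x \<in> carrier_vec (rdim P0 i)" and px: "p i *\<^sub>v x = e"
    unfolding img_def using pc[of i] by auto
  define s where "s = liftP n i P0 x"
  have sh: "is_hom ?Q ?M P0 s" unfolding s_def by (rule liftP_hom[OF n2 i P0 x])
  have ps_id: "p v * s v = one_mat (?d v)" if v: "v < n" for v
  proof -
    consider "v = i" | "v = ?j" | "v \<noteq> i" "v \<noteq> ?j" by blast
    then show ?thesis
    proof cases
      case 1
      have "s i = colm x" unfolding s_def liftP_def[OF n2 i] by simp
      then have "p v * s v = colm (p i *\<^sub>v x)" using 1 colm_mult[OF pc[of i] x] by simp
      then show ?thesis using px ec 1 by (simp add: colm_one e_def pd_eq[OF n2 i i])
    next
      case 2
      have Pij: "rmap P0 (i, ?j) \<in> carrier_mat (rdim P0 ?j) (rdim P0 i)" using rep_carrier[OF P0, of "(i,?j)"] by simp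
      have arr: "(i, ?j) \<in> snd ?Q" using i by (simp add: lam_snd[OF n2 i])
      have comm: "p ?j * rmap P0 (i, ?j) = rmap ?M (i, ?j) * p i"
        using ph arr unfolding is_hom_def by auto
      have Mij: "rmap ?M (i, ?j) = one_mat 1" using arr by (simp add: proj_rep_def)
      have pi1: "p i \<in> carrier_mat 1 (rdim P0 i)" using pc[of i] by (simp add: pd_eq[OF n2 i i])
      have "s ?j = colm (rmap P0 (i, ?j) *\<^sub>v x)" using j unfolding s_def liftP_def[OF n2 i] by simp
      moreover have "rmap P0 (i, ?j) *\<^sub>v x \<in> carrier_vec (rdim P0 ?j)" using Pij x by simp
      ultimately have "p v * s v = colm (p ?j *\<^sub>v (rmap P0 (i, ?j) *\<^sub>v x))"
        using 2 colm_mult[OF pc[of ?j]] by simp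
      also have "p ?j *\<^sub>v (rmap P0 (i, ?j) *\<^sub>v x) = (p ?j * rmap P0 (i, ?j)) *\<^sub>v x"
        using pc[of ?j] Pij x by (subst assoc_mult_mat_vec) auto
      also have "\<dots> = p i *\<^sub>v x" using comm Mij pi1 by simp
      finally show ?thesis using px ec 2 j by (simp add: colm_one e_def pd_eq[OF n2 i i])
    next
      case 3
      have "?d v = 0" using 3 by (simp add: pd_eq[OF n2 i i])
      moreover have "s v \<in> carrier_mat (rdim P0 v) (?d v)" using hom_carrier[OF sh] dM by simp
      ultimately show ?thesis using pc[of v] by (intro mat0_eq[of _ 0 0]) auto
    qed
  qed
  have "surj_hom ?Q ?M ?M (comp_hom p s)"
    unfolding surj_hom_def comp_hom_def lam_fst[OF n2 i] using ps_id by (simp add: img_one dM)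
  then have ss: "surj_hom ?Q ?M P0 s"
    using ess sh proj_is_rep[OF n2 i i] unfolding essential_epi_def by blast
  have ker: "x0 = 0\<^sub>v (rdim P0 v)" if v: "v < n" and x0: "x0 \<in> carrier_vec (rdim P0 v)"
    and px0: "p v *\<^sub>v x0 = 0\<^sub>v (?d v)" for v x0
  proof -
    have sc: "s v \<in> carrier_mat (rdim P0 v) (?d v)" using hom_carrier[OF sh] dM by simp
    have "x0 \<in> img (s v)" using ss v x0 unfolding surj_hom_def lam_fst[OF n2 i] by simp
    then obtain y where y: "y \<in> carrier_vec (?d v)" and xy: "x0 = s v *\<^sub>v y"
      unfolding img_def using sc by auto
    have "p v *\<^sub>v x0 = (p v * s v) *\<^sub>v y" using xy pc[of v] sc y by (simp add: assoc_mult_mat_vec)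
    also have "\<dots> = y" using ps_id[OF v] y by simp
    finally have "y = 0\<^sub>v (?d v)" using px0 by simp
    then show ?thesis using xy sc by (simp add: mult_vec_zero)
  qed
  have imgf: "img (f v) = {0\<^sub>v (rdim P0 v)}" if v: "v < n" for v
  proof
    show "img (f v) \<subseteq> {0\<^sub>v (rdim P0 v)}"
    proof
      fix y assume "y \<in> img (f v)"
      then obtain z where z: "z \<in> carrier_vec (rdim P1 v)" and yz: "y = f v *\<^sub>v z"
        unfolding img_def using fc[of v] by auto
      have "p v *\<^sub>v y = (p v * f v) *\<^sub>v z" using yz pc[of v] fc[of v] z by (simp add: assoc_mult_mat_vec)
      also have "\<dots> = 0\<^sub>v (?d v)" using pf[OF v] z dM by (simp add: zero_mult_vec)
      finally show "y \<in> {0\<^sub>v (rdim P0 v)}" using ker[OF v, of y] yz fc[of v] z by simp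
    qed
  next
    have "0\<^sub>v (rdim P1 v) \<in> carrier_vec (dim_col (f v))" using fc[of v] by simp
    moreover have "f v *\<^sub>v 0\<^sub>v (rdim P1 v) = 0\<^sub>v (rdim P0 v)" using fc[of v]
      by (intro eq_vecI) auto
    ultimately show "{0\<^sub>v (rdim P0 v)} \<subseteq> img (f v)" unfolding img_def
      by (auto intro!: exI[of _ "0\<^sub>v (rdim P1 v)"])
  qed
  define Z :: "'a rep" where "Z = \<lparr> rdim = (\<lambda>_. 0), rmap = (\<lambda>_. zero_mat 0 0) \<rparr>"
  define h where "h = (\<lambda>v. zero_mat (rdim P1 v) 0 :: 'a mat)"
  have Zr: "is_rep ?Q Z" unfolding is_rep_def Z_def by simp
  have Zh: "is_hom ?Q Z P1 h" unfolding is_hom_def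
  proof (intro conjI ballI allI impI)
    fix v show "h v \<in> carrier_mat (rdim P1 v) (rdim Z v)" by (simp add: h_def Z_def)
  next
    fix v show "h v = zero_mat (rdim P1 v) (rdim Z v)" by (simp add: h_def Z_def)
  next
    fix e assume "e \<in> snd ?Q"
    then show "case e of (u, w) \<Rightarrow> h w * rmap Z (u, w) = rmap P1 (u, w) * h u"
      using rep_carrier[OF P1, of e] by (cases e) (auto simp: h_def Z_def)
  qed
  have "\<forall>v \<in> fst ?Q. img (f v * h v) = img (f v)"
  proof
    fix v assume "v \<in> fst ?Q"
    then have v: "v < n" by (simp add: lam_fst[OF n2 i])
    have "f v * h v \<in> carrier_mat (rdim P0 v) 0" using fc[of v] by (simp add: h_def)
    then show "img (f v * h v) = img (f v)" using imgf[OF v] img_col0 by metis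
  qed
  then have "surj_hom ?Q Z P1 h" using minim Zr Zh by blast
  show ?thesis
  proof (cases "v < n")
    case True
    then have "img (h v) = carrier_vec (rdim P1 v)" using \<open>surj_hom ?Q Z P1 h\<close>
      unfolding surj_hom_def lam_fst[OF n2 i] by simp
    moreover have "img (h v) = {0\<^sub>v (rdim P1 v)}" by (rule img_col0) (simp add: h_def)
    ultimately show ?thesis using carrier_vec_single by metis
  next
    case False
    then show ?thesis using P1 unfolding is_rep_def lam_fst[OF n2 i] by simp
  qed
qed

lemma tau_zero:
  assumes t: "is_tau (Lambda2 n) (proj_rep (Lambda2 n) i :: 'a::field rep) N"
  shows "rdim N w = 0"
proof -
  let ?Q = "Lambda2 n"
  let ?M = "proj_rep (Lambda2 n) i :: 'a rep"
  have Nr: "is_rep ?Q N" using t unfolding is_tau_def by simp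
  obtain P0 P1 p f and g :: "nat \<Rightarrow> (nat \<Rightarrow> 'a mat) \<Rightarrow> 'a vec" where
    mpp: "min_proj_pres ?Q ?M P0 P1 p f" and
    G: "\<forall>w \<in> fst ?Q.
           (\<forall>y \<in> Hom ?Q P1 (proj_rep ?Q w). g w y \<in> carrier_vec (rdim N w)) \<and>
           (\<forall>a b y y'. y \<in> Hom ?Q P1 (proj_rep ?Q w) \<longrightarrow> y' \<in> Hom ?Q P1 (proj_rep ?Q w) \<longrightarrow>
               g w (\<lambda>v. smult_mat a (y v) + smult_mat b (y' v)) =
               smult_vec a (g w y) + smult_vec b (g w y')) \<and>
           (\<forall>\<xi> \<in> carrier_vec (rdim N w). \<exists>y \<in> Hom ?Q P1 (proj_rep ?Q w). g w y = \<xi>) \<and>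
           (\<forall>y \<in> Hom ?Q P1 (proj_rep ?Q w).
               g w y = zero_vec (rdim N w) \<longleftrightarrow>
               (\<exists>h \<in> Hom ?Q P0 (proj_rep ?Q w). y = comp_hom h f))"
    using t unfolding is_tau_def by (elim conjE exE) (rule that)
  have P0: "is_rep ?Q P0" using mpp unfolding min_proj_pres_def projective_def by auto
  have fh: "is_hom ?Q P1 P0 f" using mpp unfolding min_proj_pres_def by auto
  have z1: "\<And>v. rdim P1 v = 0" by (rule P1_zero[OF mpp])
  show ?thesis
  proof (cases "w < n")
    case False
    then show ?thesis using Nr unfolding is_rep_def lam_fst[OF n2 i] by simp
  next
    case True
    let ?W = "proj_rep ?Q w :: 'a rep"
    let ?dw = "proj_dim ?Q w"
    have dW: "rdim ?W = ?dw" by (simp add: proj_rep_def)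
    have wQ: "w \<in> fst ?Q" using True by (simp add: lam_fst[OF n2 i])
    note Gw = bspec[OF G wQ]
    define zh where "zh = (\<lambda>v. zero_mat (?dw v) (rdim P0 v) :: 'a mat)"
    have zhh: "zh \<in> Hom ?Q P0 ?W" unfolding Hom_def is_hom_def
    proof (intro CollectI conjI ballI allI impI)
      fix v show "zh v \<in> carrier_mat (rdim ?W v) (rdim P0 v)" by (simp add: zh_def dW)
    next
      fix v show "zh v = zero_mat (rdim ?W v) (rdim P0 v)" by (simp add: zh_def dW)
    next
      fix e assume "e \<in> snd ?Q"
      obtain a b where e: "e = (a, b)" by (cases e)
      have c1: "rmap P0 (a, b) \<in> carrier_mat (rdim P0 b) (rdim P0 a)" using rep_carrier[OF P0, of "(a,b)"] by simp
      have c2: "rmap ?W (a, b) \<in> carrier_mat (?dw b) (?dw a)" using pd_carrier[OF n2 i True, of "(a,b)"] by simp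
      show "case e of (u, x) \<Rightarrow> zh x * rmap P0 (u, x) = rmap ?W (u, x) * zh u"
        unfolding e zh_def using left_mult_zero_mat[OF c1] right_mult_zero_mat[OF c2] by simp
    qed
    have all0: "g w y = zero_vec (rdim N w)" if y: "y \<in> Hom ?Q P1 ?W" for y
    proof -
      have "y = comp_hom zh f"
      proof
        fix v
        have "y v \<in> carrier_mat (?dw v) 0" using hom_carrier[of ?Q P1 ?W y v] y z1 dW by (simp add: Hom_def)
        moreover have "comp_hom zh f v \<in> carrier_mat (?dw v) 0"
          using hom_carrier[OF fh, of v] z1 by (simp add: comp_hom_def zh_def)
        ultimately show "y v = comp_hom zh f v" by (rule mat0_eq) simp
      qed
      moreover have "\<forall>y \<in> Hom ?Q P1 ?W. g w y = zero_vec (rdim N w) \<longleftrightarrow>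
               (\<exists>h \<in> Hom ?Q P0 ?W. y = comp_hom h f)" using Gw by simp
      ultimately show ?thesis using y zhh by blast
    qed
    have "carrier_vec (rdim N w) = {zero_vec (rdim N w) :: 'a vec}"
    proof
      show "carrier_vec (rdim N w) \<subseteq> {zero_vec (rdim N w) :: 'a vec}"
      proof
        fix xi :: "'a vec" assume xi: "xi \<in> carrier_vec (rdim N w)"
        have "\<forall>\<xi> \<in> carrier_vec (rdim N w). \<exists>y \<in> Hom ?Q P1 ?W. g w y = \<xi>" using Gw by simp
        then obtain y where "y \<in> Hom ?Q P1 ?W" "g w y = xi" using xi by blast
        then show "xi \<in> {zero_vec (rdim N w)}" using all0 by auto
      qed
    qed simp
    then show ?thesis by (rule carrier_vec_single)
  qed
qed

lemma C_iff:
  assumes X: "is_rep (Lambda2 n) (X :: 'a::field rep)"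
  shows "X \<in> tau_perp (Lambda2 n) (proj_rep (Lambda2 n) i) \<longleftrightarrow> rdim X i = 0"
proof
  let ?Q = "Lambda2 n"
  let ?M = "proj_rep (Lambda2 n) i :: 'a rep"
  assume "X \<in> tau_perp ?Q ?M"
  then have hz: "hom_zero ?Q ?M X" unfolding tau_perp_def by simp
  show "rdim X i = 0"
  proof (rule ccontr)
    assume ne: "rdim X i \<noteq> 0"
    define x :: "'a vec" where "x = vec (rdim X i) (\<lambda>_. 1)"
    have xc: "x \<in> carrier_vec (rdim X i)" by (simp add: x_def)
    have "liftP n i X x \<in> Hom ?Q ?M X" unfolding Hom_def using liftP_hom[OF n2 i X xc] by simp
    then have "liftP n i X x i = zero_mat (rdim X i) (rdim ?M i)"
      using hz i unfolding hom_zero_def lam_fst[OF n2 i] by auto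
    moreover have "liftP n i X x i = colm x" by (simp add: liftP_def[OF n2 i])
    ultimately have "colm x $$ (0,0) = zero_mat (rdim X i) (rdim ?M i) $$ (0,0)" by simp
    moreover have "rdim ?M i = 1" using pd_eq[OF n2 i i] by (simp add: proj_rep_def)
    ultimately show False using ne by (simp add: colm_def x_def)
  qed
next
  let ?Q = "Lambda2 n"
  let ?M = "proj_rep (Lambda2 n) i :: 'a rep"
  let ?j = "Suc i mod n"
  assume X0: "rdim X i = 0"
  have j: "?j \<noteq> i" "?j < n" using sucn_ne[OF n2 i i] by auto
  have dM: "rdim ?M = proj_dim ?Q i" by (simp add: proj_rep_def)
  have hz: "hom_zero ?Q ?M X" unfolding hom_zero_def
  proof (intro ballI)
    fix h v assume h: "h \<in> Hom ?Q ?M X" and v: "v \<in> fst ?Q"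
    have hh: "is_hom ?Q ?M X h" using h by (simp add: Hom_def)
    have hc: "\<And>v. h v \<in> carrier_mat (rdim X v) (proj_dim ?Q i v)" using hom_carrier[OF hh] dM by simp
    consider "v = i" | "v = ?j" | "v \<noteq> i" "v \<noteq> ?j" by blast
    then show "h v = zero_mat (rdim X v) (rdim ?M v)"
    proof cases
      case 1 then show ?thesis using hc[of i] X0 by (intro mat0_eq[of _ 0 "rdim ?M v"]) (auto simp: dM)
    next
      case 2
      have arr: "(i, ?j) \<in> snd ?Q" using i by (simp add: lam_snd[OF n2 i])
      have comm: "h ?j * rmap ?M (i, ?j) = rmap X (i, ?j) * h i" using hh arr unfolding is_hom_def by auto
      have Mij: "rmap ?M (i, ?j) = one_mat 1" using arr by (simp add: proj_rep_def)
      have d1: "proj_dim ?Q i ?j = 1" "proj_dim ?Q i i = 1" using j by (auto simp: pd_eq[OF n2 i i])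
      have "h ?j = rmap X (i, ?j) * h i" using comm Mij hc[of ?j] d1 by simp
      also have "\<dots> = zero_mat (rdim X ?j) 1"
        using rep_carrier[OF X, of "(i, ?j)"] hc[of i] X0 d1 by (intro mult_inner0) auto
      finally show ?thesis using 2 d1 dM by simp
    next
      case 3
      then have "proj_dim ?Q i v = 0" by (simp add: pd_eq[OF n2 i i])
      then show ?thesis using hc[of v] dM by (intro mat0_eq[of _ "rdim X v" 0]) auto
    qed
  qed
  have "hom_zero ?Q X N" if t: "is_tau ?Q ?M N" for N
    unfolding hom_zero_def
  proof (intro ballI)
    fix h v assume h: "h \<in> Hom ?Q X N" and v: "v \<in> fst ?Q"
    have "h v \<in> carrier_mat (rdim N v) (rdim X v)" using h hom_carrier[of ?Q X N h v] by (simp add: Hom_def)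
    then show "h v = zero_mat (rdim N v) (rdim X v)" using tau_zero[OF t] by (intro mat0_eq) auto
  qed
  then show "X \<in> tau_perp ?Q ?M" unfolding tau_perp_def using X hz by simp
qed

end


definition dimF :: "nat \<Rightarrow> nat \<Rightarrow> 'a rep \<Rightarrow> nat \<Rightarrow> nat" where
  "dimF n i X k = (if k < n - 1 then rdim X (sig n i k) else 0)"

definition FF :: "nat \<Rightarrow> nat \<Rightarrow> 'a::field rep \<Rightarrow> 'a rep" where
  "FF n i X = \<lparr> rdim = dimF n i X,
     rmap = (\<lambda>e. if e \<in> snd (Gamma2 (n - 1)) then rmap X (sig n i (fst e), sig n i (snd e))
                 else zero_mat (dimF n i X (snd e)) (dimF n i X (fst e))) \<rparr>"

definition GG :: "nat \<Rightarrow> nat \<Rightarrow> (nat \<Rightarrow> 'a::field mat) \<Rightarrow> (nat \<Rightarrow> 'a mat)" where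
  "GG n i h = (\<lambda>k. if k < n - 1 then h (sig n i k) else zero_mat 0 0)"

lemma gam_fst: "fst (Gamma2 m) = {0..<m}" by (simp add: Gamma2_def)
lemma gam_snd: "(a, b) \<in> snd (Gamma2 m) \<longleftrightarrow> b = Suc a \<and> Suc a < m" by (auto simp: Gamma2_def)

context fixes n i :: nat assumes n2: "n \<ge> 2" and i: "i < n" begin

lemma lamarr: "Suc k < n - 1 \<Longrightarrow> (sig n i k, sig n i (Suc k)) \<in> snd (Lambda2 n)"
  using sig1[OF n2 i, of k] sig_suc[OF n2 i, of k] by (simp add: lam_snd[OF n2 i])

lemma dimF_lt: "k < n - 1 \<Longrightarrow> dimF n i X k = rdim X (sig n i k)" by (simp add: dimF_def)
lemma dimF_ge: "\<not> k < n - 1 \<Longrightarrow> dimF n i X k = 0" by (simp add: dimF_def)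

lemma FF_rdim: "rdim (FF n i X) = dimF n i X" by (simp add: FF_def)
lemma FF_rmap: "Suc k < n - 1 \<Longrightarrow> rmap (FF n i X) (k, Suc k) = rmap X (sig n i k, sig n i (Suc k))"
  by (simp add: FF_def gam_snd)

lemma E1: assumes X: "is_rep (Lambda2 n) (X :: 'a::field rep)" shows "is_rep (Gamma2 (n - 1)) (FF n i X)"
  unfolding is_rep_def
proof (intro conjI allI ballI impI)
  fix v assume "v \<notin> fst (Gamma2 (n - 1))"
  then show "rdim (FF n i X) v = 0" by (simp add: gam_fst FF_rdim dimF_ge)
next
  fix e assume e: "e \<in> snd (Gamma2 (n - 1))"
  obtain a b where ab: "e = (a, b)" by (cases e)
  then have b: "b = Suc a" "Suc a < n - 1" using e by (auto simp: gam_snd)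
  show "rmap (FF n i X) e \<in> carrier_mat (rdim (FF n i X) (snd e)) (rdim (FF n i X) (fst e))"
    using rep_carrier[OF X, of "(sig n i a, sig n i (Suc a))"] b ab
    by (simp add: FF_rmap FF_rdim dimF_lt)
next
  fix e assume e: "e \<notin> snd (Gamma2 (n - 1))"
  then show "rmap (FF n i X) e = zero_mat (rdim (FF n i X) (snd e)) (rdim (FF n i X) (fst e))"
    by (simp add: FF_def)
next
  fix u w x assume a1: "(u, w) \<in> snd (Gamma2 (n - 1))" and a2: "(w, x) \<in> snd (Gamma2 (n - 1))"
  then have w: "w = Suc u" "x = Suc w" "Suc w < n - 1" by (auto simp: gam_snd)
  have l1: "(sig n i u, sig n i w) \<in> snd (Lambda2 n)" using lamarr[of u] w by simp
  have l2: "(sig n i w, sig n i x) \<in> snd (Lambda2 n)" using lamarr[of w] w by simp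
  have "rmap X (sig n i w, sig n i x) * rmap X (sig n i u, sig n i w) = zero_mat (rdim X (sig n i x)) (rdim X (sig n i u))"
    using X l1 l2 unfolding is_rep_def by blast
  then show "rmap (FF n i X) (w, x) * rmap (FF n i X) (u, w) = zero_mat (rdim (FF n i X) x) (rdim (FF n i X) u)"
    using w by (simp add: FF_rmap FF_rdim dimF_lt)
qed

lemma E2: assumes X: "is_rep (Lambda2 n) (X :: 'a::field rep)" and Y: "is_rep (Lambda2 n) Y"
  and h: "is_hom (Lambda2 n) X Y h"
  shows "is_hom (Gamma2 (n - 1)) (FF n i X) (FF n i Y) (GG n i h)"
  unfolding is_hom_def
proof (intro conjI allI ballI impI)
  fix v show "GG n i h v \<in> carrier_mat (rdim (FF n i Y) v) (rdim (FF n i X) v)"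
    using hom_carrier[OF h, of "sig n i v"] by (simp add: GG_def FF_rdim dimF_def)
next
  fix v assume "v \<notin> fst (Gamma2 (n - 1))"
  then show "GG n i h v = zero_mat (rdim (FF n i Y) v) (rdim (FF n i X) v)"
    by (simp add: GG_def FF_rdim dimF_def gam_fst)
next
  fix e assume e: "e \<in> snd (Gamma2 (n - 1))"
  obtain a b where ab: "e = (a, b)" by (cases e)
  then have b: "b = Suc a" "Suc a < n - 1" using e by (auto simp: gam_snd)
  have "h (sig n i b) * rmap X (sig n i a, sig n i b) = rmap Y (sig n i a, sig n i b) * h (sig n i a)"
    using h lamarr[of a] b unfolding is_hom_def by auto
  then show "case e of (u, w) \<Rightarrow> GG n i h w * rmap (FF n i X) (u, w) = rmap (FF n i Y) (u, w) * GG n i h u"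
    using ab b by (simp add: GG_def FF_rmap)
qed

lemma E3: "GG n i (id_hom (Lambda2 n) X) = id_hom (Gamma2 (n - 1)) (FF n i (X :: 'a::field rep))"
proof
  fix k show "GG n i (id_hom (Lambda2 n) X) k = id_hom (Gamma2 (n - 1)) (FF n i X) k"
    using sig1[OF n2 i, of k] by (simp add: GG_def id_hom_def lam_fst[OF n2 i] gam_fst FF_rdim dimF_def)
qed

lemma E4: "GG n i (comp_hom g h) = comp_hom (GG n i g) (GG n i (h :: nat \<Rightarrow> 'a::field mat))"
proof
  fix k show "GG n i (comp_hom g h) k = comp_hom (GG n i g) (GG n i h) k"
    by (simp add: GG_def comp_hom_def)
qed

lemma E5: assumes X0: "rdim X i = 0" and Y0: "rdim Y i = 0"
  shows "inj_on (GG n i) (Hom (Lambda2 n) X (Y :: 'a::field rep))"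
proof (rule inj_onI)
  fix h h' assume h: "h \<in> Hom (Lambda2 n) X Y" and h': "h' \<in> Hom (Lambda2 n) X Y" and eq: "GG n i h = GG n i h'"
  have hh: "is_hom (Lambda2 n) X Y h" and hh': "is_hom (Lambda2 n) X Y h'" using h h' by (auto simp: Hom_def)
  show "h = h'"
  proof
    fix v
    consider "v < n" "v \<noteq> i" | "v = i" | "\<not> v < n" by blast
    then show "h v = h' v"
    proof cases
      case 1
      then have r: "rho n i v < n - 1" "sig n i (rho n i v) = v" using rho1[OF n2 i] by auto
      have "GG n i h (rho n i v) = GG n i h' (rho n i v)" using eq by simp
      then show ?thesis using r by (simp add: GG_def)
    next
      case 2
      then show ?thesis using hom_carrier[OF hh, of v] hom_carrier[OF hh', of v] X0 Y0
        by (intro mat0_eq[of _ 0 0]) auto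
    next
      case 3
      then show ?thesis using hh hh' unfolding is_hom_def lam_fst[OF n2 i] by simp
    qed
  qed
qed

lemma E6: assumes X: "is_rep (Lambda2 n) (X :: 'a::field rep)" and Y: "is_rep (Lambda2 n) Y"
  and X0: "rdim X i = 0" and Y0: "rdim Y i = 0"
  and h': "is_hom (Gamma2 (n - 1)) (FF n i X) (FF n i Y) h'"
  shows "\<exists>h \<in> Hom (Lambda2 n) X Y. GG n i h = h'"
proof -
  define H where "H = (\<lambda>v. if v < n \<and> v \<noteq> i then h' (rho n i v) else zero_mat (rdim Y v) (rdim X v))"
  have Hc: "H v \<in> carrier_mat (rdim Y v) (rdim X v)" for v
  proof (cases "v < n \<and> v \<noteq> i")
    case True
    then have r: "rho n i v < n - 1" "sig n i (rho n i v) = v" using rho1[OF n2 i] by auto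
    then show ?thesis using hom_carrier[OF h', of "rho n i v"] True
      by (simp add: H_def FF_rdim dimF_lt)
  next
    case False then show ?thesis unfolding H_def by (subst if_not_P) auto
  qed
  have GH: "GG n i H = h'"
  proof
    fix k show "GG n i H k = h' k"
    proof (cases "k < n - 1")
      case True
      then show ?thesis using sig1[OF n2 i, of k] by (simp add: GG_def H_def)
    next
      case False
      then show ?thesis using h' unfolding is_hom_def gam_fst by (simp add: GG_def FF_rdim dimF_ge)
    qed
  qed
  have comm: "H w * rmap X (u, w) = rmap Y (u, w) * H u" if uw: "(u, w) \<in> snd (Lambda2 n)" for u w
  proof -
    have u: "u < n" "w = Suc u mod n" using uw by (auto simp: lam_snd[OF n2 i])
    have wn: "w < n" using u sucn_ne[OF n2 i u(1)] by simp
    have Xc: "rmap X (u, w) \<in> carrier_mat (rdim X w) (rdim X u)" using rep_carrier[OF X, of "(u,w)"] by simp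
    have Yc: "rmap Y (u, w) \<in> carrier_mat (rdim Y w) (rdim Y u)" using rep_carrier[OF Y, of "(u,w)"] by simp
    consider "u \<noteq> i" "w \<noteq> i" | "u = i" | "w = i" by blast
    then show ?thesis
    proof cases
      case 1
      have rs: "Suc (rho n i u) < n - 1" "rho n i w = Suc (rho n i u)"
        using rho_suc[OF n2 i u(1) 1(1)] 1 u by auto
      have su: "sig n i (rho n i u) = u" using rho1[OF n2 i u(1) 1(1)] by simp
      have sw: "sig n i (rho n i w) = w" using rho1[OF n2 i wn 1(2)] by simp
      have ga: "(rho n i u, Suc (rho n i u)) \<in> snd (Gamma2 (n - 1))" using rs by (simp add: gam_snd)
      have "h' (Suc (rho n i u)) * rmap (FF n i X) (rho n i u, Suc (rho n i u)) =
            rmap (FF n i Y) (rho n i u, Suc (rho n i u)) * h' (rho n i u)"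
        using h' ga unfolding is_hom_def by auto
      then have "h' (rho n i w) * rmap X (u, w) = rmap Y (u, w) * h' (rho n i u)"
        using rs su sw by (simp add: FF_rmap)
      then show ?thesis using 1 u wn by (simp add: H_def)
    next
      case 2
      show ?thesis using Hc[of w] Hc[of u] Xc Yc 2 X0
        by (intro mat0_eq[of _ "rdim Y w" 0]) auto
    next
      case 3
      show ?thesis using Hc[of w] Hc[of u] Xc Yc 3 Y0
        by (intro mat0_eq[of _ 0 "rdim X u"]) auto
    qed
  qed
  have "is_hom (Lambda2 n) X Y H" unfolding is_hom_def
  proof (intro conjI ballI allI impI)
    fix v show "H v \<in> carrier_mat (rdim Y v) (rdim X v)" by (rule Hc)
  next
    fix v assume "v \<notin> fst (Lambda2 n)" then show "H v = zero_mat (rdim Y v) (rdim X v)"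
      by (simp add: H_def lam_fst[OF n2 i])
  next
    fix e assume "e \<in> snd (Lambda2 n)"
    then show "case e of (u, w) \<Rightarrow> H w * rmap X (u, w) = rmap Y (u, w) * H u"
      using comm by (cases e) simp
  qed
  then show ?thesis using GH by (auto simp: Hom_def)
qed

lemma E7: assumes Y: "is_rep (Gamma2 (n - 1)) (Y :: 'a::field rep)"
  shows "\<exists>X. is_rep (Lambda2 n) X \<and> rdim X i = 0 \<and> FF n i X = Y"
proof -
  define dX where "dX = (\<lambda>v. if v < n \<and> v \<noteq> i then rdim Y (rho n i v) else 0)"
  define X :: "'a rep" where "X = \<lparr> rdim = dX, rmap = (\<lambda>e. if e \<in> snd (Lambda2 n) \<and> fst e \<noteq> i \<and> snd e \<noteq> i
      then rmap Y (rho n i (fst e), rho n i (snd e)) else zero_mat (dX (snd e)) (dX (fst e))) \<rparr>"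
  have arrs: "(rho n i u, rho n i w) \<in> snd (Gamma2 (n - 1)) \<and> u < n \<and> w < n"
    if "(u, w) \<in> snd (Lambda2 n)" "u \<noteq> i" "w \<noteq> i" for u w
  proof -
    have u: "u < n" "w = Suc u mod n" using that by (auto simp: lam_snd[OF n2 i])
    show ?thesis using rho_suc[OF n2 i u(1) that(2)] u that sucn_ne[OF n2 i u(1)] by (simp add: gam_snd)
  qed
  have Xmap: "rmap X (u, w) = rmap Y (rho n i u, rho n i w)" if "(u, w) \<in> snd (Lambda2 n)" "u \<noteq> i" "w \<noteq> i" for u w
    using that by (simp add: X_def)
  have Xdim: "rdim X = dX" by (simp add: X_def)
  have Xc: "rmap X e \<in> carrier_mat (dX (snd e)) (dX (fst e))" for e
  proof (cases "e \<in> snd (Lambda2 n) \<and> fst e \<noteq> i \<and> snd e \<noteq> i")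
    case True
    obtain u w where e: "e = (u, w)" by (cases e)
    then have a: "(rho n i u, rho n i w) \<in> snd (Gamma2 (n - 1))" "u < n" "w < n" using arrs True by auto
    show ?thesis using rep_carrier[OF Y, of "(rho n i u, rho n i w)"] True e a Xmap
      by (simp add: dX_def)
  next
    case False
    then show ?thesis unfolding X_def by (subst rep.select_convs(2), subst if_not_P) auto
  qed
  have Xr: "is_rep (Lambda2 n) X" unfolding is_rep_def Xdim
  proof (intro conjI allI ballI impI)
    fix v assume "v \<notin> fst (Lambda2 n)" then show "dX v = 0" by (simp add: dX_def lam_fst[OF n2 i])
  next
    fix e show "rmap X e \<in> carrier_mat (dX (snd e)) (dX (fst e))" by (rule Xc)
  next
    fix e assume "e \<notin> snd (Lambda2 n)" then show "rmap X e = zero_mat (dX (snd e)) (dX (fst e))"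
      by (simp add: X_def)
  next
    fix u v x assume uv: "(u, v) \<in> snd (Lambda2 n)" and vx: "(v, x) \<in> snd (Lambda2 n)"
    show "rmap X (v, x) * rmap X (u, v) = zero_mat (dX x) (dX u)"
    proof (cases "u \<noteq> i \<and> v \<noteq> i \<and> x \<noteq> i")
      case True
      have g1: "(rho n i u, rho n i v) \<in> snd (Gamma2 (n - 1))" "u < n" "v < n" using arrs[OF uv] True by auto
      have g2: "(rho n i v, rho n i x) \<in> snd (Gamma2 (n - 1))" "x < n" using arrs[OF vx] True by auto
      have "rmap Y (rho n i v, rho n i x) * rmap Y (rho n i u, rho n i v) = zero_mat (rdim Y (rho n i x)) (rdim Y (rho n i u))"
        using Y g1 g2 unfolding is_rep_def by blast
      then show ?thesis using Xmap[OF uv] Xmap[OF vx] True g1 g2 by (simp add: dX_def)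
    next
      case False
      then consider "u = i \<or> v = i" | "x = i" by blast
      then show ?thesis
      proof cases
        case 1
        then have "rmap X (u, v) = zero_mat (dX v) (dX u)" by (auto simp: X_def)
        then show ?thesis using right_mult_zero_mat[OF Xc[of "(v,x)"]] by simp
      next
        case 2
        then have "rmap X (v, x) = zero_mat (dX x) (dX v)" by (auto simp: X_def)
        then show ?thesis using left_mult_zero_mat[OF Xc[of "(u,v)"]] by simp
      qed
    qed
  qed
  have X0: "rdim X i = 0" by (simp add: Xdim dX_def)
  have d: "rdim (FF n i X) = rdim Y"
  proof
    fix k show "rdim (FF n i X) k = rdim Y k"
    proof (cases "k < n - 1")
      case True then show ?thesis using sig1[OF n2 i True] by (simp add: FF_rdim dimF_lt Xdim dX_def)
    next
      case False then show ?thesis using Y unfolding is_rep_def gam_fst by (simp add: FF_rdim dimF_ge)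
    qed
  qed
  have m: "rmap (FF n i X) = rmap Y"
  proof
    fix e :: "nat \<times> nat"
    obtain a b where e: "e = (a, b)" by (cases e)
    show "rmap (FF n i X) e = rmap Y e"
    proof (cases "(a, b) \<in> snd (Gamma2 (n - 1))")
      case True
      then have b: "b = Suc a" "Suc a < n - 1" by (auto simp: gam_snd)
      have l: "(sig n i a, sig n i b) \<in> snd (Lambda2 n)" using lamarr[OF b(2)] b by simp
      have s1: "sig n i a \<noteq> i" "rho n i (sig n i a) = a" using sig1[OF n2 i, of a] b by auto
      have s2: "sig n i b \<noteq> i" "rho n i (sig n i b) = b" using sig1[OF n2 i, of b] b by auto
      show ?thesis using e b Xmap[OF l s1(1) s2(1)] s1 s2 by (simp add: FF_rmap)
    next
      case False
      then have "rmap (FF n i X) e = zero_mat (rdim Y b) (rdim Y a)"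
        using d e FF_rdim[of X] by (simp add: FF_def)
      also have "\<dots> = rmap Y e" using Y False e unfolding is_rep_def by simp
      finally show ?thesis .
    qed
  qed
  have "FF n i X = Y" using d m by (intro rep.equality) auto
  then show ?thesis using Xr X0 by blast
qed

lemma E8: assumes Y: "is_rep Q (Y :: 'a::field rep)"
  and arrs: "\<And>u w. (u, w) \<in> snd Q \<Longrightarrow> u \<in> fst Q \<and> w \<in> fst Q"
  shows "isomorphic Q Y Y"
proof -
  have h: "is_hom Q Y Y (id_hom Q Y)" unfolding is_hom_def
  proof (intro conjI ballI allI impI)
    fix v show "id_hom Q Y v \<in> carrier_mat (rdim Y v) (rdim Y v)" by (simp add: id_hom_def)
  next
    fix v assume "v \<notin> fst Q" then show "id_hom Q Y v = zero_mat (rdim Y v) (rdim Y v)" by (simp add: id_hom_def)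
  next
    fix e assume e: "e \<in> snd Q"
    obtain u w where ew: "e = (u, w)" by (cases e)
    have "u \<in> fst Q" "w \<in> fst Q" using arrs e ew by auto
    then show "case e of (u, w) \<Rightarrow> id_hom Q Y w * rmap Y (u, w) = rmap Y (u, w) * id_hom Q Y u"
      using rep_carrier[OF Y, of e] ew by (simp add: id_hom_def)
  qed
  have c: "comp_hom (id_hom Q Y) (id_hom Q Y) = id_hom Q Y"
    by (rule ext) (simp add: comp_hom_def id_hom_def)
  show ?thesis unfolding isomorphic_def using h c by blast
qed

end


theorem proposition5p1:
  fixes n i :: nat
  assumes alg_closed: "\<forall>q :: 'a::field poly. degree q \<ge> 1 \<longrightarrow> (\<exists>x. poly q x = 0)"
    and n2: "n \<ge> 2"
    and i: "i < n"
  shows "cat_equivalent (Lambda2 n)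
           (tau_perp (Lambda2 n) (proj_rep (Lambda2 n) i :: 'a rep))
           (Gamma2 (n - 1))"
proof -
  let ?Q = "Lambda2 n"
  let ?C = "tau_perp (Lambda2 n) (proj_rep (Lambda2 n) i :: 'a rep)"
  let ?G = "Gamma2 (n - 1)"
  have Cm: "is_rep ?Q X \<and> rdim X i = 0" if "X \<in> ?C" for X
  proof -
    have "is_rep ?Q X" using that unfolding tau_perp_def by simp
    then show ?thesis using C_iff[OF n2 i, of X] that by simp
  qed
  show ?thesis unfolding cat_equivalent_def
  proof (intro exI[of _ "FF n i"] exI[of _ "\<lambda>X Y h. GG n i h"] conjI ballI allI impI)
    fix X assume "X \<in> ?C" then show "is_rep ?G (FF n i X)" using Cm E1[OF n2 i] by blast
  next
    fix X Y h assume X: "X \<in> ?C" and Y: "Y \<in> ?C" and h: "h \<in> Hom ?Q X Y"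
    have "is_hom ?Q X Y h" using h by (simp add: Hom_def)
    then have "is_hom ?G (FF n i X) (FF n i Y) (GG n i h)"
      using Cm[OF X] Cm[OF Y] E2[OF n2 i] by blast
    then show "GG n i h \<in> Hom ?G (FF n i X) (FF n i Y)" by (simp add: Hom_def)
  next
    fix X assume "X \<in> ?C" show "GG n i (id_hom ?Q X) = id_hom ?G (FF n i X)" by (rule E3[OF n2 i])
  next
    fix X Y Z h g assume "X \<in> ?C" "Y \<in> ?C" "Z \<in> ?C" "h \<in> Hom ?Q X Y" "g \<in> Hom ?Q Y Z"
    show "GG n i (comp_hom g h) = comp_hom (GG n i g) (GG n i h)" by (rule E4[OF n2 i])
  next
    fix X Y assume "X \<in> ?C" "Y \<in> ?C"
    then show "inj_on (GG n i) (Hom ?Q X Y)" using Cm E5[OF n2 i] by blast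
  next
    fix X Y assume X: "X \<in> ?C" and Y: "Y \<in> ?C"
    show "GG n i ` Hom ?Q X Y = Hom ?G (FF n i X) (FF n i Y)"
    proof
      show "GG n i ` Hom ?Q X Y \<subseteq> Hom ?G (FF n i X) (FF n i Y)"
        using Cm[OF X] Cm[OF Y] E2[OF n2 i] by (auto simp: Hom_def)
    next
      show "Hom ?G (FF n i X) (FF n i Y) \<subseteq> GG n i ` Hom ?Q X Y"
      proof
        fix h' assume "h' \<in> Hom ?G (FF n i X) (FF n i Y)"
        then have "is_hom ?G (FF n i X) (FF n i Y) h'" by (simp add: Hom_def)
        then obtain h where "h \<in> Hom ?Q X Y" "GG n i h = h'"
          using E6[OF n2 i] Cm[OF X] Cm[OF Y] by blast
        then show "h' \<in> GG n i ` Hom ?Q X Y" by blast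
      qed
    qed
  next
    fix Y :: "'a rep" assume Y: "is_rep ?G Y"
    obtain X where X: "is_rep ?Q X" "rdim X i = 0" "FF n i X = Y" using E7[OF n2 i Y] by blast
    have XC: "X \<in> ?C" using C_iff[OF n2 i X(1)] X(2) by simp
    have "isomorphic ?G Y Y" by (rule E8[OF n2 i Y]) (auto simp: gam_snd gam_fst)
    then show "\<exists>X \<in> ?C. isomorphic ?G (FF n i X) Y" using XC X(3) by blast
  qed
qed


end
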